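(* Let $m\ge 2$ and let $\mathcal{R}_m^4$ be the rose graph with $N_m=3m+1$ nodes. For the NBCRW on $\mathcal{R}_m^4$, the stationary probability of the hub node, of any internal node, and of any peripheral node are respectively $$\pi_{\mathrm H}^{\mathrm B}=\frac{m}{2(m+\sqrt{2m-1})}=\frac{N_m-1}{2(N_m-1)+2\sqrt{6N_m-15}},\qquad \pi_{\mathrm I}^{\mathrm B}=\frac{1}{4m}=\frac{3}{4(N_m-1)},$$ $$\pi_{\mathrm P}^{\mathrm B}=\frac{m\sqrt{2m-1}-2m+1}{2m(m-1)^2}=\frac{3(N_m-1)\sqrt{6N_m-15}-18N_m+45}{2(N_m-1)(N_m-4)^2}.$$
   Context: The rose graph $\mathcal{R}_m^4$ ($m\ge2$) is obtained by gluing $m$ cycles of length 4 at a single common node, the hub. It has $3m+1$ nodes and $4m$ edges. In each 4-cycle (petal), the two neighbours of the hub are internal nodes and the node opposite the hub is the peripheral node. The non-backtracking matrix $\mathbf{B}$ of a graph is the matrix indexed by directed edges $i\to j$ (each undirected edge gives two directed edges), with $B_{i\to j,\,k\to l}=1$ if $j=k$ and $i\neq l$, and $0$ otherwise; $v=(v_{i\to j})$ is a non-negative eigenvector for its leading (Perron–Frobenius) eigenvalue, and the non-backtracking centrality of node $i$ is $x_i=\sum_{j\in\mathcal{N}_i}v_{i\to j}$. The non-backtracking centrality based random walk (NBCRW) is the Markov chain on nodes with transition probabilities $p_{ij}=a_{ij}x_j/\sum_k a_{ik}x_k$, $(a_{ij})$ the adjacency matrix; its stationary distribution is the probability vector $\pi$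 with $\pi\mathbf{P}=\pi$. *)

theory Defs
  imports Complex_Main
begin

text \<open>Rose graph R_m^4 on nodes {0..3m}: hub 0; petal k (k < m) has internal
  nodes 3k+1, 3k+2 and peripheral node 3k+3; edges hub--3k+1, hub--3k+2,
  3k+1--3k+3, 3k+2--3k+3.\<close>

definition rose_nodes :: "nat \<Rightarrow> nat set" where
  "rose_nodes m = {0..3*m}"

definition rose_adj :: "nat \<Rightarrow> nat \<Rightarrow> nat \<Rightarrow> bool" where
  "rose_adj m i j \<longleftrightarrow> (\<exists>k<m. {i,j} = {0, 3*k+1} \<or> {i,j} = {0, 3*k+2}
                              \<or> {i,j} = {3*k+1, 3*k+3} \<or> {i,j} = {3*k+2, 3*k+3})"

definition rose_dedges :: "nat \<Rightarrow> (nat \<times> nat) set" where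
  "rose_dedges m = {(i,j). i \<in> rose_nodes m \<and> j \<in> rose_nodes m \<and> rose_adj m i j}"

definition nb_entry :: "nat \<times> nat \<Rightarrow> nat \<times> nat \<Rightarrow> 'a::zero_neq_one" where
  "nb_entry e f = (if snd e = fst f \<and> fst e \<noteq> snd f then 1 else 0)"

definition nb_eigenpair :: "nat \<Rightarrow> 'a::field \<Rightarrow> (nat \<times> nat \<Rightarrow> 'a) \<Rightarrow> bool" where
  "nb_eigenpair m mu w \<longleftrightarrow> (\<exists>e\<in>rose_dedges m. w e \<noteq> 0) \<and>
     (\<forall>e\<in>rose_dedges m. (\<Sum>f\<in>rose_dedges m. nb_entry e f * w f) = mu * w e)"

definition nb_perron :: "nat \<Rightarrow> real \<Rightarrow> (nat \<times> nat \<Rightarrow> real) \<Rightarrow> bool" where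
  "nb_perron m lam v \<longleftrightarrow> nb_eigenpair m lam v \<and> (\<forall>e\<in>rose_dedges m. v e \<ge> 0) \<and>
     (\<forall>mu w. nb_eigenpair m (mu::complex) w \<longrightarrow> cmod mu \<le> lam)"

definition nb_centrality :: "nat \<Rightarrow> (nat \<times> nat \<Rightarrow> real) \<Rightarrow> nat \<Rightarrow> real" where
  "nb_centrality m v i = (\<Sum>j\<in>rose_nodes m. if rose_adj m i j then v (i,j) else 0)"

definition nbcrw_P :: "nat \<Rightarrow> (nat \<times> nat \<Rightarrow> real) \<Rightarrow> nat \<Rightarrow> nat \<Rightarrow> real" where
  "nbcrw_P m v i j =
     (if rose_adj m i j then nb_centrality m v j else 0) /
     (\<Sum>k\<in>rose_nodes m. if rose_adj m i k then nb_centrality m v k else 0)"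

definition stationary :: "nat \<Rightarrow> (nat \<Rightarrow> nat \<Rightarrow> real) \<Rightarrow> (nat \<Rightarrow> real) \<Rightarrow> bool" where
  "stationary m P p \<longleftrightarrow> (\<forall>i\<in>rose_nodes m. p i \<ge> 0) \<and> (\<Sum>i\<in>rose_nodes m. p i) = 1 \<and>
     (\<forall>j\<in>rose_nodes m. (\<Sum>i\<in>rose_nodes m. p i * P i j) = p j)"

end

theory Submission imports Defs begin

lemma adj_sym: "rose_adj m i j = rose_adj m j i"
  by (auto simp: rose_adj_def insert_commute)

lemma adj_nodes: "rose_adj m i j \<Longrightarrow> i \<le> 3*m \<and> j \<le> 3*m"
  unfolding rose_adj_def doubleton_eq_iff by (auto; presburger)

lemma a00[simp]: "rose_adj m 0 0 = False"
  unfolding rose_adj_def doubleton_eq_iff by (auto; presburger)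
lemma a01[simp]: "rose_adj m 0 (3*k+1) = (k<m)"
  unfolding rose_adj_def doubleton_eq_iff by (auto; presburger)
lemma a02[simp]: "rose_adj m 0 (3*k+2) = (k<m)"
  unfolding rose_adj_def doubleton_eq_iff by (auto; presburger)
lemma a03[simp]: "rose_adj m 0 (3*k+3) = False"
  unfolding rose_adj_def doubleton_eq_iff by (auto; presburger)
lemma a10[simp]: "rose_adj m (3*k+1) 0 = (k<m)"
  using a01 adj_sym by metis
lemma a20[simp]: "rose_adj m (3*k+2) 0 = (k<m)"
  using a02 adj_sym by metis
lemma a30[simp]: "rose_adj m (3*k+3) 0 = False"
  using a03 adj_sym by metis
lemma a11[simp]: "rose_adj m (3*k+1) (3*k'+1) = False"
  unfolding rose_adj_def doubleton_eq_iff by (auto; presburger)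
lemma a12[simp]: "rose_adj m (3*k+1) (3*k'+2) = False"
  unfolding rose_adj_def doubleton_eq_iff by (auto; presburger)
lemma a13[simp]: "rose_adj m (3*k+1) (3*k'+3) = (k' = k \<and> k < m)"
  unfolding rose_adj_def doubleton_eq_iff by (auto; presburger)
lemma a21[simp]: "rose_adj m (3*k+2) (3*k'+1) = False"
  unfolding rose_adj_def doubleton_eq_iff by (auto; presburger)
lemma a22[simp]: "rose_adj m (3*k+2) (3*k'+2) = False"
  unfolding rose_adj_def doubleton_eq_iff by (auto; presburger)
lemma a23[simp]: "rose_adj m (3*k+2) (3*k'+3) = (k' = k \<and> k < m)"
  unfolding rose_adj_def doubleton_eq_iff by (auto; presburger)
lemma a31[simp]: "rose_adj m (3*k+3) (3*k'+1) = (k' = k \<and> k < m)"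
  unfolding rose_adj_def doubleton_eq_iff by (auto; presburger)
lemma a32[simp]: "rose_adj m (3*k+3) (3*k'+2) = (k' = k \<and> k < m)"
  unfolding rose_adj_def doubleton_eq_iff by (auto; presburger)
lemma a33[simp]: "rose_adj m (3*k+3) (3*k'+3) = False"
  unfolding rose_adj_def doubleton_eq_iff by (auto; presburger)

lemmas adjS[simp] = a01[simplified] a02[simplified] a10[simplified] a20[simplified] a11[simplified] a12[simplified] a13[simplified] a21[simplified] a22[simplified] a23[simplified] a31[simplified] a32[simplified]

lemma nodes_sum: "(\<Sum>i\<in>{0..3*(m::nat)}. f i) = f 0 + (\<Sum>k<m. f (3*k+1) + f (3*k+2) + f (3*k+3))"
proof (induction m)
  case 0 then show ?case by simp
next
  case (Suc m)
  have e: "3 * Suc m = Suc (Suc (Suc (3*m)))" by simp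
  have e2: "3*m+3 = Suc (Suc (Suc (3*m)))" by simp
  show ?case unfolding e using Suc by (simp add: sum.atLeast0_atMost_Suc add.assoc e2)
qed

lemma nbr0: "(\<Sum>l\<in>rose_nodes m. if rose_adj m 0 l then (g l::real) else 0) = (\<Sum>k<m. g (3*k+1) + g (3*k+2))"
  unfolding rose_nodes_def nodes_sum by simp

lemma nbr1: "k < m \<Longrightarrow> (\<Sum>l\<in>rose_nodes m. if rose_adj m (3*k+1) l then (g l::real) else 0) = g 0 + g (3*k+3)"
  unfolding rose_nodes_def nodes_sum by simp
lemma nbr2: "k < m \<Longrightarrow> (\<Sum>l\<in>rose_nodes m. if rose_adj m (3*k+2) l then (g l::real) else 0) = g 0 + g (3*k+3)"
  unfolding rose_nodes_def nodes_sum by simp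
lemma nbr3: "k < m \<Longrightarrow> (\<Sum>l\<in>rose_nodes m. if rose_adj m (3*k+3) l then (g l::real) else 0) = g (3*k+1) + g (3*k+2)"
  unfolding rose_nodes_def nodes_sum by (simp add: sum.distrib)


lemma ne3[simp]: "(3*x = Suc (3*(y::nat))) = False" "(Suc (3*x) = 3*(y::nat)) = False"
  "(3*x = Suc (Suc (3*(y::nat)))) = False" "(Suc (Suc (3*x)) = 3*(y::nat)) = False"
  by presburger+

lemma memD: "rose_adj m i j \<Longrightarrow> (i,j) \<in> rose_dedges m"
  using adj_nodes[of m i j] by (auto simp: rose_dedges_def rose_nodes_def)

lemma nb_sum:
  assumes "j \<in> rose_nodes m"
  shows "(\<Sum>f\<in>rose_dedges m. nb_entry (i,j) f * (w f::real))
       = (\<Sum>l\<in>rose_nodes m. if rose_adj m j l then (if l \<noteq> i then w (j,l) else 0) else 0)"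
proof -
  let ?N = "rose_nodes m"
  have fin: "finite ?N" by (simp add: rose_nodes_def)
  have D: "rose_dedges m = Sigma ?N (\<lambda>a. {l\<in>?N. rose_adj m a l})"
    by (auto simp: rose_dedges_def)
  have "(\<Sum>f\<in>rose_dedges m. nb_entry (i,j) f * w f)
      = (\<Sum>a\<in>?N. \<Sum>l\<in>{l\<in>?N. rose_adj m a l}. nb_entry (i,j) (a,l) * w (a,l))"
    unfolding D by (subst sum.Sigma) (use fin in auto)
  also have "\<dots> = (\<Sum>a\<in>?N. if a = j then (\<Sum>l\<in>{l\<in>?N. rose_adj m j l}. (if l \<noteq> i then w (j,l) else 0)) else 0)"
    by (rule sum.cong) (auto simp: nb_entry_def intro!: sum.cong)
  also have "\<dots> = (\<Sum>l\<in>{l\<in>?N. rose_adj m j l}. (if l \<noteq> i then w (j,l) else 0))"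
    using assms fin by simp
  also have "\<dots> = (\<Sum>l\<in>?N. if rose_adj m j l then (if l \<noteq> i then w (j,l) else 0) else 0)"
    using fin by (simp add: sum.inter_filter)
  finally show ?thesis .
qed

lemma stat_nbr: "(\<Sum>i\<in>rose_nodes m. p i * nbcrw_P m v i j)
   = (\<Sum>i\<in>rose_nodes m. if rose_adj m j i then p i * nbcrw_P m v i j else 0)"
  by (rule sum.cong) (auto simp: nbcrw_P_def adj_sym)


theorem theorem4:
  fixes m :: nat and lam :: real and v :: "nat \<times> nat \<Rightarrow> real" and p :: "nat \<Rightarrow> real"
  assumes "m \<ge> 2"
    and "nb_perron m lam v"
    and "stationary m (nbcrw_P m v) p"
  defines "N \<equiv> real (3*m+1)"
  shows "p 0 = real m / (2 * (real m + sqrt (2 * real m - 1)))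
       \<and> p 0 = (N - 1) / (2 * (N - 1) + 2 * sqrt (6 * N - 15))
       \<and> (\<forall>k<m. p (3*k+1) = 1 / (4 * real m) \<and> p (3*k+2) = 1 / (4 * real m)
                \<and> p (3*k+1) = 3 / (4 * (N - 1)) \<and> p (3*k+2) = 3 / (4 * (N - 1))
                \<and> p (3*k+3) = (real m * sqrt (2 * real m - 1) - 2 * real m + 1)
                                / (2 * real m * (real m - 1)^2)
                \<and> p (3*k+3) = (3 * (N - 1) * sqrt (6 * N - 15) - 18 * N + 45)
                                / (2 * (N - 1) * (N - 4)^2))"
proof -
  let ?N = "rose_nodes m" and ?D = "rose_dedges m"
  have eig: "\<And>e. e \<in> ?D \<Longrightarrow> (\<Sum>f\<in>?D. nb_entry e f * v f) = lam * v e"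
    and nonneg: "\<And>e. e \<in> ?D \<Longrightarrow> v e \<ge> 0"
    and nz: "\<exists>e\<in>?D. v e \<noteq> 0"
    using assms(2) unfolding nb_perron_def nb_eigenpair_def by auto
  have eq: "(\<Sum>l\<in>?N. if rose_adj m j l then (if l \<noteq> i then v (j,l) else 0) else 0) = lam * v (i,j)"
    if "rose_adj m i j" for i j
  proof -
    have "j \<in> ?N" using adj_nodes[OF that] by (simp add: rose_nodes_def)
    then show ?thesis using eig[OF memD[OF that]] nb_sum[of j m i v] by simp
  qed
  define X where "X k = v (0, 3*k+1)" for k
  define Y where "Y k = v (0, 3*k+2)" for k
  define S where "S = (\<Sum>k<m. X k + Y k)"
  have E: "v (3*k+1, 3*k+3) = lam * X k \<and> v (3*k+3, 3*k+2) = lam * v (3*k+1, 3*k+3)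
     \<and> v (3*k+2, 0) = lam * v (3*k+3, 3*k+2)
     \<and> v (3*k+2, 3*k+3) = lam * Y k \<and> v (3*k+3, 3*k+1) = lam * v (3*k+2, 3*k+3)
     \<and> v (3*k+1, 0) = lam * v (3*k+3, 3*k+1)" if k: "k < m" for k
    using k eq[of 0 "3*k+1"] nbr1[of k m "\<lambda>l. if l \<noteq> 0 then v (3*k+1,l) else 0"]
      eq[of "3*k+1" "3*k+3"] nbr3[of k m "\<lambda>l. if l \<noteq> 3*k+1 then v (3*k+3,l) else 0"]
      eq[of "3*k+3" "3*k+2"] nbr2[of k m "\<lambda>l. if l \<noteq> 3*k+3 then v (3*k+2,l) else 0"]
      eq[of 0 "3*k+2"] nbr2[of k m "\<lambda>l. if l \<noteq> 0 then v (3*k+2,l) else 0"]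
      eq[of "3*k+2" "3*k+3"] nbr3[of k m "\<lambda>l. if l \<noteq> 3*k+2 then v (3*k+3,l) else 0"]
      eq[of "3*k+3" "3*k+1"] nbr1[of k m "\<lambda>l. if l \<noteq> 3*k+3 then v (3*k+1,l) else 0"]
    by (simp add: X_def Y_def)
  have E4: "S - Y k = lam * v (3*k+2, 0) \<and> S - X k = lam * v (3*k+1, 0)" if k: "k < m" for k
  proof -
    have a: "(\<Sum>k'<m. (if 3*k'+1 \<noteq> 3*k+2 then X k' else 0) + (if 3*k'+2 \<noteq> 3*k+2 then Y k' else 0))
         = lam * v (3*k+2, 0)"
      using k eq[of "3*k+2" 0] nbr0[of m "\<lambda>l. if l \<noteq> 3*k+2 then v (0,l) else 0"]
      unfolding X_def Y_def by simp
    have b: "(\<Sum>k'<m. (if 3*k'+1 \<noteq> 3*k+1 then X k' else 0) + (if 3*k'+2 \<noteq> 3*k+1 then Y k' else 0))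
         = lam * v (3*k+1, 0)"
      using k eq[of "3*k+1" 0] nbr0[of m "\<lambda>l. if l \<noteq> 3*k+1 then v (0,l) else 0"]
      unfolding X_def Y_def by simp
    have a': "(\<Sum>k'<m. (if 3*k'+1 \<noteq> 3*k+2 then X k' else 0) + (if 3*k'+2 \<noteq> 3*k+2 then Y k' else 0))
        = S - Y k"
    proof -
      have "S = (\<Sum>k'<m. ((if 3*k'+1 \<noteq> 3*k+2 then X k' else 0) + (if 3*k'+2 \<noteq> 3*k+2 then Y k' else 0))
                + (if k' = k then Y k' else 0))"
        unfolding S_def by (rule sum.cong) auto
      also have "\<dots> = (\<Sum>k'<m. (if 3*k'+1 \<noteq> 3*k+2 then X k' else 0) + (if 3*k'+2 \<noteq> 3*k+2 then Y k' else 0)) + Y k"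
        using k by (simp only: sum.distrib) simp
      finally show ?thesis by simp
    qed
    have b': "(\<Sum>k'<m. (if 3*k'+1 \<noteq> 3*k+1 then X k' else 0) + (if 3*k'+2 \<noteq> 3*k+1 then Y k' else 0))
        = S - X k"
    proof -
      have "S = (\<Sum>k'<m. ((if 3*k'+1 \<noteq> 3*k+1 then X k' else 0) + (if 3*k'+2 \<noteq> 3*k+1 then Y k' else 0))
                + (if k' = k then X k' else 0))"
        unfolding S_def by (rule sum.cong) auto
      also have "\<dots> = (\<Sum>k'<m. (if 3*k'+1 \<noteq> 3*k+1 then X k' else 0) + (if 3*k'+2 \<noteq> 3*k+1 then Y k' else 0)) + X k"
        using k by (simp only: sum.distrib) simp
      finally show ?thesis by simp
    qed
    show ?thesis using a b a' b' by simp
  qed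
  have Xnn: "X k \<ge> 0" "Y k \<ge> 0" if "k < m" for k
    using that nonneg[OF memD[of m 0 "3*k+1"]] nonneg[OF memD[of m 0 "3*k+2"]]
    unfolding X_def Y_def by simp_all
  have Eall: "v (3*k+1, 3*k+3) = lam * X k \<and> v (3*k+3, 3*k+2) = lam^2 * X k
     \<and> v (3*k+2, 0) = lam^3 * X k
     \<and> v (3*k+2, 3*k+3) = lam * Y k \<and> v (3*k+3, 3*k+1) = lam^2 * Y k
     \<and> v (3*k+1, 0) = lam^3 * Y k" if k: "k < m" for k
    using E[OF k] by (simp add: power2_eq_square power3_eq_cube)
  have key: "S - Y k = lam^4 * X k \<and> S - X k = lam^4 * Y k" if k: "k < m" for k
    using E4[OF k] Eall[OF k] by (simp add: power3_eq_cube power4_eq_xxxx)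
  have ex: "\<exists>k<m. X k \<noteq> 0 \<or> Y k \<noteq> 0"
  proof (rule ccontr)
    assume z: "\<not> ?thesis"
    obtain i j where ij: "(i,j) \<in> ?D" "v (i,j) \<noteq> 0" using nz by auto
    then have "rose_adj m i j" by (simp add: rose_dedges_def)
    then obtain k where k: "k < m" and
      c: "(i = 0 \<and> j = 3*k+1) \<or> (j = 0 \<and> i = 3*k+1) \<or> (i = 0 \<and> j = 3*k+2) \<or> (j = 0 \<and> i = 3*k+2)
        \<or> (i = 3*k+1 \<and> j = 3*k+3) \<or> (j = 3*k+1 \<and> i = 3*k+3)
        \<or> (i = 3*k+2 \<and> j = 3*k+3) \<or> (j = 3*k+2 \<and> i = 3*k+3)"
      unfolding rose_adj_def doubleton_eq_iff by blast
    have x0: "X k = 0" "Y k = 0" using z k by auto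
    have "v (0, 3*k+1) = X k" "v (0, 3*k+2) = Y k" by (simp_all add: X_def Y_def)
    then show False using c ij(2) Eall[OF k] x0 by auto
  qed
  then obtain k0 where k0: "k0 < m" "X k0 \<noteq> 0 \<or> Y k0 \<noteq> 0" by blast
  have Spos: "S > 0"
    unfolding S_def
  proof (rule sum_pos2[of _ k0])
    show "0 < X k0 + Y k0" using k0 Xnn[of k0] by auto
  qed (use k0 Xnn in auto)
  have sumeq: "(\<Sum>k<m. (S - Y k) + (S - X k)) = (\<Sum>k<m. lam^4 * (X k + Y k))"
    by (rule sum.cong) (use key in \<open>auto simp: algebra_simps\<close>)
  have "(\<Sum>k<m. (S - Y k) + (S - X k)) = (\<Sum>k<m. 2*S - (X k + Y k))"
    by (rule sum.cong) auto
  also have "\<dots> = 2 * real m * S - S" by (simp add: sum_subtractf S_def)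
  finally have "2 * real m * S - S = lam^4 * S" using sumeq by (simp add: sum_distrib_left S_def)
  then have "(2 * real m - 1 - lam^4) * S = 0" by (simp add: algebra_simps)
  then have l4: "lam^4 = 2 * real m - 1" using Spos by simp
  have mge: "real m \<ge> 2" using assms(1) by simp
  have lpos: "lam > 0"
  proof -
    have "lam \<noteq> 0" using l4 mge by auto
    moreover have "lam \<ge> 0"
    proof (cases "X k0 \<noteq> 0")
      case True
      then have "X k0 > 0" using Xnn[OF k0(1)] by auto
      moreover have "lam * X k0 \<ge> 0" using Eall[OF k0(1)] nonneg[OF memD[of m "3*k0+1" "3*k0+3"]] k0 by simp
      ultimately show ?thesis by (simp add: zero_le_mult_iff)
    next
      case False
      then have "Y k0 > 0" using k0 Xnn[OF k0(1)] by auto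
      moreover have "lam * Y k0 \<ge> 0" using Eall[OF k0(1)] nonneg[OF memD[of m "3*k0+2" "3*k0+3"]] k0 by simp
      ultimately show ?thesis by (simp add: zero_le_mult_iff)
    qed
    ultimately show ?thesis by simp
  qed
  define c where "c = S / (2 * real m)"
  have cpos: "c > 0" using Spos mge by (simp add: c_def)
  have XY: "X k = c \<and> Y k = c" if k: "k < m" for k
  proof -
    have h1: "S - Y k = (2*real m - 1) * X k" and h2: "S - X k = (2*real m - 1) * Y k"
      using key[OF k] l4 by auto
    have "(2*real m - 2) * (X k - Y k) = 0" using h1 h2 by (simp add: algebra_simps)
    then have "X k = Y k" using mge by simp
    then show ?thesis using h1 mge by (simp add: c_def field_simps algebra_simps)
  qed
  define sq where "sq = lam^2"
  have sqpos: "sq > 0" using lpos by (simp add: sq_def)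
  have sq2: "sq^2 = 2 * real m - 1" using l4 by (simp add: sq_def power_mult[symmetric])
  have sqrt_eq: "sqrt (2 * real m - 1) = sq"
    using sq2 sqpos by (metis less_eq_real_def real_sqrt_unique)
  define cent where "cent = nb_centrality m v"
  have C0: "cent 0 = 2 * real m * c"
  proof -
    have "cent 0 = (\<Sum>k<m. v (0, 3*k+1) + v (0, 3*k+2))"
      unfolding cent_def nb_centrality_def using nbr0[of m "\<lambda>l. v (0,l)"] by simp
    also have "\<dots> = S" by (simp add: S_def X_def Y_def)
    finally show ?thesis using mge by (simp add: c_def)
  qed
  have C1: "cent (3*k+1) = (lam^3 + lam) * c \<and> cent (3*k+2) = (lam^3 + lam) * c
      \<and> cent (3*k+3) = 2 * sq * c" if k: "k < m" for k
    using k nbr1[of k m "\<lambda>l. v (3*k+1,l)"] nbr2[of k m "\<lambda>l. v (3*k+2,l)"]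
      nbr3[of k m "\<lambda>l. v (3*k+3,l)"] Eall[OF k] XY[OF k]
    unfolding cent_def nb_centrality_def sq_def by (simp add: algebra_simps)
  define den where "den i = (\<Sum>k\<in>rose_nodes m. if rose_adj m i k then cent k else 0)" for i
  have Pdef: "nbcrw_P m v i j = (if rose_adj m i j then cent j else 0) / den i" for i j
    unfolding nbcrw_P_def den_def cent_def by simp
  have D0: "den 0 = 2 * real m * (lam^3 + lam) * c"
  proof -
    have "den 0 = (\<Sum>k<m. cent (3*k+1) + cent (3*k+2))"
      unfolding den_def using nbr0[of m cent] by simp
    also have "\<dots> = (\<Sum>k<m. 2 * (lam^3 + lam) * c)" by (rule sum.cong) (use C1 in auto)
    finally show ?thesis by simp
  qed
  have D1: "den (3*k+1) = 2 * real m * c + 2 * sq * c \<and> den (3*k+2) = 2 * real m * c + 2 * sq * c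
      \<and> den (3*k+3) = 2 * (lam^3 + lam) * c" if k: "k < m" for k
    using k nbr1[of k m cent] nbr2[of k m cent] nbr3[of k m cent] C1[OF k] C0
    unfolding den_def by simp
  have l3pos: "lam^3 + lam > 0" using lpos by (simp add: add_pos_pos)
  have P: "nbcrw_P m v 0 (3*k+1) = 1 / (2 * real m) \<and> nbcrw_P m v 0 (3*k+2) = 1 / (2 * real m)
    \<and> nbcrw_P m v (3*k+3) (3*k+1) = 1/2 \<and> nbcrw_P m v (3*k+3) (3*k+2) = 1/2
    \<and> nbcrw_P m v (3*k+1) (3*k+3) = sq / (real m + sq)
    \<and> nbcrw_P m v (3*k+2) (3*k+3) = sq / (real m + sq)" if k: "k < m" for k
  proof -
    have q: "nbcrw_P m v 0 (3*k+1) = cent (3*k+1) / den 0" "nbcrw_P m v 0 (3*k+2) = cent (3*k+2) / den 0"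
      "nbcrw_P m v (3*k+3) (3*k+1) = cent (3*k+1) / den (3*k+3)"
      "nbcrw_P m v (3*k+3) (3*k+2) = cent (3*k+2) / den (3*k+3)"
      "nbcrw_P m v (3*k+1) (3*k+3) = cent (3*k+3) / den (3*k+1)"
      "nbcrw_P m v (3*k+2) (3*k+3) = cent (3*k+3) / den (3*k+2)"
      using k unfolding Pdef by simp_all
    have c1: "cent (3*k+1) = (lam^3 + lam) * c" and c2: "cent (3*k+2) = (lam^3 + lam) * c"
      and c3: "cent (3*k+3) = 2 * sq * c" using C1[OF k] by auto
    have d1: "den (3*k+1) = 2 * c * (real m + sq)" and d2: "den (3*k+2) = 2 * c * (real m + sq)"
      and d3: "den (3*k+3) = 2 * (lam^3 + lam) * c" using D1[OF k] by (auto simp: algebra_simps)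
    have ms: "real m + sq > 0" using sqpos by simp
    have A: "(lam^3 + lam) * c \<noteq> 0" using cpos l3pos by simp
    have D0': "den 0 = 2 * real m * ((lam^3 + lam) * c)" using D0 by (simp add: algebra_simps)
    have d3': "den (3*k+3) = 2 * ((lam^3 + lam) * c)" using d3 by simp
    have e1: "((lam^3 + lam) * c) / (2 * real m * ((lam^3 + lam) * c)) = 1 / (2 * real m)"
      using A by simp
    have e2: "((lam^3 + lam) * c) / (2 * ((lam^3 + lam) * c)) = 1 / 2"
      using A by simp
    have e3: "2 * sq * c / (2 * c * (real m + sq)) = sq / (real m + sq)"
      using cpos by simp
    show ?thesis unfolding q c1 c2 c3 d1 d2 d3' D0' e1 e2 e3 by simp
  qed
  have st: "\<And>j. j \<in> ?N \<Longrightarrow> (\<Sum>i\<in>?N. p i * nbcrw_P m v i j) = p j"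
    and tot: "(\<Sum>i\<in>?N. p i) = 1"
    using assms(3) unfolding stationary_def by auto
  have inN: "3*k+1 \<in> ?N" "3*k+2 \<in> ?N" "3*k+3 \<in> ?N" if "k < m" for k
    using that by (auto simp: rose_nodes_def)
  define b where "b = sq / (real m + sq)"
  have SE: "p (3*k+1) = p 0 / (2 * real m) + p (3*k+3) / 2
      \<and> p (3*k+2) = p 0 / (2 * real m) + p (3*k+3) / 2
      \<and> p (3*k+3) = b * (p (3*k+1) + p (3*k+2))" if k: "k < m" for k
  proof -
    have 1: "p (3*k+1) = p 0 / (2 * real m) + p (3*k+3) / 2"
      using k st[OF inN(1)[OF k]] stat_nbr[where p=p and m=m and v=v and j="3*k+1"]
        nbr1[of k m "\<lambda>i. p i * nbcrw_P m v i (3*k+1)"] P[OF k] by simp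
    have 2: "p (3*k+2) = p 0 / (2 * real m) + p (3*k+3) / 2"
      using k st[OF inN(2)[OF k]] stat_nbr[where p=p and m=m and v=v and j="3*k+2"]
        nbr2[of k m "\<lambda>i. p i * nbcrw_P m v i (3*k+2)"] P[OF k] by simp
    have 3: "p (3*k+3) = b * (p (3*k+1) + p (3*k+2))"
      using k st[OF inN(3)[OF k]] stat_nbr[where p=p and m=m and v=v and j="3*k+3"]
        nbr3[of k m "\<lambda>i. p i * nbcrw_P m v i (3*k+3)"] P[OF k] by (simp add: b_def algebra_simps)
    show ?thesis using 1 2 3 by blast
  qed
  have ms: "real m + sq > 0" using sqpos by simp
  have mpos: "real m > 0" using mge by simp
  have T: "p (3*k+1) = p 0 * (real m + sq) / (2 * real m^2) \<and> p (3*k+2) = p 0 * (real m + sq) / (2 * real m^2)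
     \<and> p (3*k+3) = p 0 * sq / real m^2" if k: "k < m" for k
  proof -
    define a where "a = p (3*k+1)"
    define q where "q = p (3*k+3)"
    have s1: "p (3*k+1) = p 0 / (2 * real m) + p (3*k+3) / 2"
      and s2: "p (3*k+2) = p 0 / (2 * real m) + p (3*k+3) / 2"
      and s3: "p (3*k+3) = b * (p (3*k+1) + p (3*k+2))" using SE[OF k] by blast+
    have ab: "p (3*k+2) = a" using s1 s2 unfolding a_def by linarith
    have h1: "a = p 0 / (2 * real m) + q / 2" using s1 unfolding a_def q_def .
    have h2: "q = b * (2 * a)" using s3 ab unfolding a_def q_def by simp
    have "a = p 0 / (2 * real m) + b * a" using h1 h2 by simp
    then have "a * (real m + sq) = p 0 * (real m + sq) / (2 * real m) + sq * a"
      using ms unfolding b_def by (simp add: field_simps)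
    then have "a * real m = p 0 * (real m + sq) / (2 * real m)" by (simp add: algebra_simps)
    then have ha: "a = p 0 * (real m + sq) / (2 * real m^2)" using mpos
      by (simp add: field_simps power2_eq_square)
    have gen: "\<And>x y z w::real. y \<noteq> 0 \<Longrightarrow> x / y * (2 * (z * y / (2 * w))) = z * x / w"
      by (simp add: field_simps)
    have hq: "q = p 0 * sq / real m^2" using h2 ha ms gen[of "real m + sq" sq "p 0" "real m^2"]
      unfolding b_def by simp
    show ?thesis using ha hq ab unfolding a_def q_def by (metis (no_types))
  qed
  have "1 = p 0 + (\<Sum>k<m. p (3*k+1) + p (3*k+2) + p (3*k+3))"
    using tot unfolding rose_nodes_def nodes_sum by simp
  also have "\<dots> = p 0 + (\<Sum>k<m. p 0 * (real m + sq) / real m^2 + p 0 * sq / real m^2)"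
    by (rule arg_cong[where f="\<lambda>x. p 0 + x"], rule sum.cong) (use T in auto)
  also have "\<dots> = p 0 * (2 * (real m + sq)) / real m"
    using mpos by (simp add: field_simps power2_eq_square)
  finally have p0: "p 0 = real m / (2 * (real m + sq))"
    using mpos ms by (simp add: field_simps)
  have Nv: "N = 3 * real m + 1" unfolding N_def by simp
  have sN: "sqrt (6 * N - 15) = 3 * sq"
  proof -
    have "6 * N - 15 = 9 * (2 * real m - 1)" unfolding Nv by simp
    then have "sqrt (6 * N - 15) = sqrt (9 * (2 * real m - 1))" by (rule arg_cong[where f=sqrt])
    also have "\<dots> = sqrt 9 * sqrt (2 * real m - 1)" by (rule real_sqrt_mult)
    also have "sqrt 9 = (3::real)" by (simp add: real_sqrt_unique)
    finally show ?thesis using sqrt_eq by simp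
  qed
  have g1: "p 0 = real m / (2 * (real m + sqrt (2 * real m - 1)))" using p0 sqrt_eq by simp
  have g2: "p 0 = (N - 1) / (2 * (N - 1) + 2 * sqrt (6 * N - 15))"
  proof -
    have N1: "N - 1 = 3 * real m" unfolding Nv by simp
    have "real m / (2 * (real m + sq)) = (3 * real m) / (2 * (3 * real m) + 2 * (3 * sq))"
      using ms by (simp add: field_simps)
    then show ?thesis unfolding sN N1 p0 .
  qed
  have m1: "real m - 1 > 0" using mge by simp
  have qform: "sq / (2 * real m * (real m + sq)) = (real m * sq - 2 * real m + 1) / (2 * real m * (real m - 1)^2)"
  proof -
    have id: "(real m * sq - 2 * real m + 1) * (2 * real m * (real m + sq)) - sq * (2 * real m * (real m - 1)^2)
        = 2 * real m^2 * (sq^2 - (2 * real m - 1))"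
      by (simp add: algebra_simps power2_eq_square)
    have "sq * (2 * real m * (real m - 1)^2) = (real m * sq - 2 * real m + 1) * (2 * real m * (real m + sq))"
    proof -
      have "(real m * sq - 2 * real m + 1) * (2 * real m * (real m + sq)) - sq * (2 * real m * (real m - 1)^2) = 0"
        using id sq2 by simp
      then show ?thesis by linarith
    qed
    then show ?thesis using mpos ms m1 by (simp add: frac_eq_eq)
  qed
  have gen1: "\<And>x y. x \<noteq> 0 \<Longrightarrow> y \<noteq> 0 \<Longrightarrow> x / (2 * y) * y / (2 * x^2) = 1 / (4 * (x::real))"
    by (simp add: field_simps power2_eq_square)
  have gen2: "\<And>x y. x \<noteq> 0 \<Longrightarrow> y \<noteq> 0 \<Longrightarrow> x / (2 * y) * sq / x^2 = sq / (2 * x * (y::real))"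
    by (simp add: field_simps power2_eq_square)
  have pa: "p 0 * (real m + sq) / (2 * real m^2) = 1 / (4 * real m)"
    unfolding p0 using gen1[of "real m" "real m + sq"] mpos ms by simp
  have pq: "p 0 * sq / real m^2 = sq / (2 * real m * (real m + sq))"
    unfolding p0 using gen2[of "real m" "real m + sq"] mpos ms by simp
  have pqN: "(3 * (N - 1) * sqrt (6 * N - 15) - 18 * N + 45) / (2 * (N - 1) * (N - 4)^2)
      = (real m * sq - 2 * real m + 1) / (2 * real m * (real m - 1)^2)"
  proof -
    have n1: "(3 * (N - 1) * sqrt (6 * N - 15) - 18 * N + 45) = 27 * (real m * sq - 2 * real m + 1)"
      unfolding sN unfolding Nv by (simp add: algebra_simps)
    have n2: "2 * (N - 1) * (N - 4)^2 = 27 * (2 * real m * (real m - 1)^2)"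
      unfolding Nv by (simp add: algebra_simps power2_eq_square)
    show ?thesis unfolding n1 n2 by (rule mult_divide_mult_cancel_left) simp
  qed
  have paN: "1 / (4 * real m) = 3 / (4 * (N - 1))" unfolding Nv using mpos by simp
  show ?thesis
  proof (intro conjI allI impI)
    fix k assume k: "k < m"
    show "p (3*k+1) = 1 / (4 * real m)" "p (3*k+2) = 1 / (4 * real m)"
      "p (3*k+1) = 3 / (4 * (N - 1))" "p (3*k+2) = 3 / (4 * (N - 1))"
      using T[OF k] pa paN by simp_all
    show "p (3*k+3) = (real m * sqrt (2 * real m - 1) - 2 * real m + 1) / (2 * real m * (real m - 1)^2)"
      using T[OF k] pq qform sqrt_eq by simp
    show "p (3*k+3) = (3 * (N - 1) * sqrt (6 * N - 15) - 18 * N + 45) / (2 * (N - 1) * (N - 4)^2)"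
      using T[OF k] pq qform pqN by simp
  qed (use g1 g2 in auto)
qed

end
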